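(* Let $s>0$, $Y>0$ with $\frac sY<\frac13$, let $x_+(\tau)=\frac sYe^{s\tau}$, $\tau^*=\frac1s\ln\left(\frac Y{3s}\right)>0$, and (so that the coexistence equilibrium $E_+=(x_+(\tau),1-x_+(\tau))$ exists) consider $\tau\in[0,\tau^*]$. Define \[ \omega_+(\tau)=\sqrt{\tfrac12\left(-x_+(\tau)^2+\sqrt{x_+(\tau)^4+s^2\left(12x_+(\tau)^2-16x_+(\tau)+4\right)}\right)}, \] \[ h_1(\omega,\tau)=\frac{\omega}{s}\cdot\frac{s+x_+(\tau)-s\,x_+(\tau)-2x_+(\tau)^2-\omega^2}{(1-2x_+(\tau))^2+\omega^2},\qquad h_2(\omega,\tau)=\frac{\omega^2(1+s-x_+(\tau))-(1-2x_+(\tau))s\,x_+(\tau)}{s\left((1-2x_+(\tau))^2+\omega^2\right)}. \] Then: \begin{enumerate} \item For $\tau\in[0,\tau^*]$, $h_1(\omega_+(\tau),\tau)^2+h_2(\omega_+(\tau),\tau)^2=1$. \item $h_1(\omega_+(\tau^* ),\tau^* )=0$, and $h_1(\omega_+(\tau),\tau)>0$ for $0\leq\tau<\tau^*$. \item $h_2(\omega_+(\tau^* ),\tau^* )=-1$, and $-1<h_2(\omega_+(\tau),\tau)<1$ for $0\leq\tau<\tau^*$. \end{enumerate} *)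

theory Defs
  imports Complex_Main
begin

definition xplus :: "real \<Rightarrow> real \<Rightarrow> real \<Rightarrow> real" where
  "xplus s Y \<tau> = (s / Y) * exp (s * \<tau>)"

definition tau_star :: "real \<Rightarrow> real \<Rightarrow> real" where
  "tau_star s Y = (1 / s) * ln (Y / (3 * s))"

definition omega_plus :: "real \<Rightarrow> real \<Rightarrow> real \<Rightarrow> real" where
  "omega_plus s Y \<tau> = (let x = xplus s Y \<tau> in
     sqrt ((1/2) * (- (x^2) + sqrt (x^4 + s^2 * (12 * x^2 - 16 * x + 4)))))"

definition h1 :: "real \<Rightarrow> real \<Rightarrow> real \<Rightarrow> real \<Rightarrow> real" where
  "h1 s Y \<omega> \<tau> = (let x = xplus s Y \<tau> in
     (\<omega> / s) * ((s + x - s * x - 2 * x^2 - \<omega>^2) / ((1 - 2 * x)^2 + \<omega>^2)))"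

definition h2 :: "real \<Rightarrow> real \<Rightarrow> real \<Rightarrow> real \<Rightarrow> real" where
  "h2 s Y \<omega> \<tau> = (let x = xplus s Y \<tau> in
     (\<omega>^2 * (1 + s - x) - (1 - 2 * x) * s * x) / (s * ((1 - 2 * x)^2 + \<omega>^2)))"

end

theory Submission
  imports Defs
begin

lemma ident: "let B = s+x-s*x-2*x^2; c = 1+s-x; a = 1 - 2*x; d = a*s*x in
  (s::real)^2*(a^2+w)^2 - w*(B-w)^2 - (c*w-d)^2 = ((s^2+2*B-c^2+x^2) - w)*(w^2+x^2*w-s^2*(1-x)*(1-3*x))"
  by (simp add: Let_def algebra_simps power2_eq_square power3_eq_cube)

lemma wfacts:
  fixes s x :: real
  assumes s: "s > 0" and x0: "0 < x" and x1: "x \<le> 1/3"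
  defines "w \<equiv> (1/2) * (- (x^2) + sqrt (x^4 + s^2 * (12 * x^2 - 16 * x + 4)))"
  shows "w \<ge> 0" "w^2 + x^2*w - s^2*(1-x)*(1-3*x) = 0"
    "x < 1/3 \<Longrightarrow> 0 < w \<and> w < s+x-s*x-2*x^2"
    "x = 1/3 \<Longrightarrow> w = 0"
proof -
  define r where "r = sqrt (x^4 + s^2 * (12 * x^2 - 16 * x + 4))"
  have K: "s^2 * (12 * x^2 - 16 * x + 4) = 4 * (s^2*(1-x)*(1-3*x))" by (simp add: algebra_simps power2_eq_square)
  have Kn: "s^2*(1-x)*(1-3*x) \<ge> 0" using x1 by (simp add: mult_nonneg_nonneg)
  have arg: "x^4 + s^2 * (12 * x^2 - 16 * x + 4) \<ge> x^4" using K Kn by linarith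
  have r2: "r^2 = x^4 + s^2 * (12 * x^2 - 16 * x + 4)" unfolding r_def
    using arg by (simp add: zero_le_power) 
  have x4: "x^4 = (x^2)^2" by simp
  have rge: "r \<ge> x^2"
  proof -
    have "sqrt (x^4) = x^2" unfolding x4 by (simp only: real_sqrt_abs) simp
    then show ?thesis using real_sqrt_le_mono[OF arg] by (simp add: r_def)
  qed
  have wr: "w = (r - x^2)/2" unfolding w_def r_def by simp
  show "w \<ge> 0" using wr rge by simp
  have q: "w^2 + x^2*w - s^2*(1-x)*(1-3*x) = 0"
    unfolding wr using r2 K by (simp add: field_simps power2_eq_square power4_eq_xxxx)
  then show "w^2 + x^2*w - s^2*(1-x)*(1-3*x) = 0" .
  show "x = 1/3 \<Longrightarrow> w = 0"
  proof -
    assume "x = 1/3"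
    then have "w^2 + x^2*w = 0" "x^2 > 0" using q by auto
    then have "w * (w + x^2) = 0" by (simp add: algebra_simps power2_eq_square)
    then show "w = 0" using \<open>w \<ge> 0\<close> \<open>x^2>0\<close> by auto
  qed
  assume xl: "x < 1/3"
  have Kp: "s^2*(1-x)*(1-3*x) > 0" using xl s by simp
  have wpos: "w > 0"
  proof (rule ccontr)
    assume "\<not> w > 0" then have "w = 0" using \<open>w \<ge> 0\<close> by simp
    then have "s^2*(1-x)*(1-3*x) = 0" using q by simp
    then show False using Kp by linarith
  qed
  define B where "B = s+x-s*x-2*x^2"
  have B1: "B \<ge> s*(1-x)" unfolding B_def using x0 xl
    by (simp add: algebra_simps power2_eq_square)
  have sx: "s*(1-x) > 0" using s xl by simp
  have Bp: "B > 0" using B1 sx by linarith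
  have "B^2 \<ge> (s*(1-x))^2" using B1 sx by (simp add: power_mono)
  moreover have "(s*(1-x))^2 > s^2*(1-x)*(1-3*x)"
  proof -
    have "(s*(1-x))^2 - s^2*(1-x)*(1-3*x) = s^2*(1-x)*(2*x)" by (simp add: algebra_simps power2_eq_square)
    moreover have "s^2*(1-x)*(2*x) > 0" using s x0 xl by simp
    ultimately show ?thesis by linarith
  qed
  moreover have "x^2*B > 0" using x0 Bp by simp
  ultimately have qB: "B^2 + x^2*B - s^2*(1-x)*(1-3*x) > 0" by linarith
  have "w < B"
  proof (rule ccontr)
    assume "\<not> w < B"
    then have "(w - B) * (w + B + x^2) \<ge> 0" using Bp by (simp add: mult_nonneg_nonneg)
    moreover have "(w - B) * (w + B + x^2) = (w^2 + x^2*w - s^2*(1-x)*(1-3*x)) - (B^2 + x^2*B - s^2*(1-x)*(1-3*x))"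
      by (simp add: algebra_simps power2_eq_square)
    ultimately show False using q qB by linarith
  qed
  then show "0 < w \<and> w < s+x-s*x-2*x^2" using wpos B_def by simp
qed

lemma main:
  fixes s x w :: real
  assumes s: "s > 0" and x0: "0 < x" and x1: "x \<le> 1/3" and w0: "w \<ge> 0"
    and q: "w^2 + x^2*w - s^2*(1-x)*(1-3*x) = 0"
  shows "((sqrt w / s) * ((s + x - s * x - 2 * x^2 - (sqrt w)^2) / ((1 - 2 * x)^2 + (sqrt w)^2)))^2
     + ((sqrt w^2 * (1 + s - x) - (1 - 2 * x) * s * x) / (s * ((1 - 2 * x)^2 + sqrt w^2)))^2 = 1"
proof -
  have sw: "(sqrt w)^2 = w" using w0 by simp
  have "1 - 2*x > 0" using x1 by simp
  then have D: "(1 - 2*x)^2 + w > 0" using w0 by (simp add: add_pos_nonneg)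
  have E: "s^2*((1-2*x)^2+w)^2 - w*((s+x-s*x-2*x^2)-w)^2 - ((1+s-x)*w-((1-2*x)*s*x))^2 = 0"
    using ident[of s x w] q by (simp add: Let_def)
  define N1 where "N1 = s + x - s * x - 2 * x^2 - w"
  define N2 where "N2 = w * (1 + s - x) - (1 - 2 * x) * s * x"
  define DD where "DD = (1 - 2 * x)^2 + w"
  have E2: "w*N1^2 + N2^2 = s^2*DD^2" using E unfolding N1_def N2_def DD_def
    by (simp add: algebra_simps)
  have "((sqrt w / s) * (N1 / DD))^2 + (N2 / (s * DD))^2 = (w*N1^2 + N2^2)/(s^2*DD^2)"
    by (simp add: power_mult_distrib power_divide sw add_divide_distrib)
  also have "\<dots> = 1"
  proof -
    have "DD > 0" using D unfolding DD_def .
    then have "s^2*DD^2 \<noteq> 0" using s by simp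
    then show ?thesis by (simp add: E2)
  qed
  finally show ?thesis unfolding sw N1_def N2_def DD_def .
qed

theorem lemmaA1:
  fixes s Y :: real
  assumes "s > 0" and "Y > 0" and "s / Y < 1/3"
  shows "(\<forall>\<tau>. 0 \<le> \<tau> \<and> \<tau> \<le> tau_star s Y \<longrightarrow>
            (h1 s Y (omega_plus s Y \<tau>) \<tau>)^2 + (h2 s Y (omega_plus s Y \<tau>) \<tau>)^2 = 1)
       \<and> h1 s Y (omega_plus s Y (tau_star s Y)) (tau_star s Y) = 0
       \<and> (\<forall>\<tau>. 0 \<le> \<tau> \<and> \<tau> < tau_star s Y \<longrightarrow> h1 s Y (omega_plus s Y \<tau>) \<tau> > 0)
       \<and> h2 s Y (omega_plus s Y (tau_star s Y)) (tau_star s Y) = -1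
       \<and> (\<forall>\<tau>. 0 \<le> \<tau> \<and> \<tau> < tau_star s Y \<longrightarrow>
            -1 < h2 s Y (omega_plus s Y \<tau>) \<tau> \<and> h2 s Y (omega_plus s Y \<tau>) \<tau> < 1)"
proof -
  have s: "s > 0" using assms by simp
  define W where "W = (\<lambda>x::real. (1/2) * (- (x^2) + sqrt (x^4 + s^2 * (12 * x^2 - 16 * x + 4))))"
  define H1 where "H1 = (\<lambda>x w::real. (sqrt w / s) * ((s + x - s * x - 2 * x^2 - (sqrt w)^2) / ((1 - 2 * x)^2 + (sqrt w)^2)))"
  define H2 where "H2 = (\<lambda>x w::real. (sqrt w^2 * (1 + s - x) - (1 - 2 * x) * s * x) / (s * ((1 - 2 * x)^2 + sqrt w^2)))"
  have om: "omega_plus s Y t = sqrt (W (xplus s Y t))" for t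
    unfolding omega_plus_def W_def Let_def by simp
  have eh1: "h1 s Y (omega_plus s Y t) t = H1 (xplus s Y t) (W (xplus s Y t))" for t
    unfolding om h1_def H1_def Let_def by simp
  have eh2: "h2 s Y (omega_plus s Y t) t = H2 (xplus s Y t) (W (xplus s Y t))" for t
    unfolding om h2_def H2_def Let_def by simp
  have xts: "xplus s Y (tau_star s Y) = 1/3"
  proof -
    have "Y / (3*s) > 0" using assms by simp
    then have "exp (s * tau_star s Y) = Y/(3*s)" unfolding tau_star_def using s by simp
    then show ?thesis unfolding xplus_def using assms by simp
  qed
  have xpos: "xplus s Y t > 0" for t unfolding xplus_def using assms by simp
  have xle: "xplus s Y t \<le> 1/3" if "t \<le> tau_star s Y" for t
  proof -
    have "exp (s*t) \<le> exp (s * tau_star s Y)" using that s by simp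
    then have "xplus s Y t \<le> xplus s Y (tau_star s Y)" unfolding xplus_def using assms
      by (simp add: mult_left_mono divide_right_mono)
    then show ?thesis using xts by simp
  qed
  have xlt: "xplus s Y t < 1/3" if "t < tau_star s Y" for t
  proof -
    have "exp (s*t) < exp (s * tau_star s Y)" using that s by simp
    then have "xplus s Y t < xplus s Y (tau_star s Y)" unfolding xplus_def using assms
      by (simp add: divide_strict_right_mono)
    then show ?thesis using xts by simp
  qed
  have P1: "(H1 x (W x))^2 + (H2 x (W x))^2 = 1" if "0 < x" "x \<le> 1/3" for x
    unfolding H1_def H2_def W_def
    by (rule main[OF s that wfacts(1)[OF s that] wfacts(2)[OF s that]])
  have W3: "W (1/3) = 0" using wfacts(4)[of s "1/3"] s unfolding W_def by simp
  have H13: "H1 (1/3) (W (1/3)) = 0" unfolding W3 H1_def by simp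
  have H23: "H2 (1/3) (W (1/3)) = -1" unfolding W3 H2_def using s by (simp add: power2_eq_square)
  have H1p: "H1 x (W x) > 0" if "0 < x" "x < 1/3" for x
  proof -
    have w: "0 < W x" "W x < s+x-s*x-2*x^2" using wfacts(3)[OF s that(1)] that unfolding W_def by auto
    have "1 - 2*x > 0" using that by simp
    then have "(1 - 2*x)^2 + W x > 0" using w by (simp add: add_pos_pos)
    then show ?thesis unfolding H1_def using w s by simp
  qed
  have H2b: "-1 < H2 x (W x) \<and> H2 x (W x) < 1" if "0 < x" "x < 1/3" for x
  proof -
    have "(H1 x (W x))^2 > 0" using H1p[OF that] by simp
    then have "(H2 x (W x))^2 < 1" using P1[of x] that by linarith
    then have "\<bar>H2 x (W x)\<bar> < 1" by (simp add: abs_square_less_1)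
    then show ?thesis by linarith
  qed
  have A: "\<forall>\<tau>. 0 \<le> \<tau> \<and> \<tau> \<le> tau_star s Y \<longrightarrow>
            (h1 s Y (omega_plus s Y \<tau>) \<tau>)^2 + (h2 s Y (omega_plus s Y \<tau>) \<tau>)^2 = 1"
    unfolding eh1 eh2 using P1 xpos xle by blast
  have B: "\<forall>\<tau>. 0 \<le> \<tau> \<and> \<tau> < tau_star s Y \<longrightarrow> h1 s Y (omega_plus s Y \<tau>) \<tau> > 0"
    unfolding eh1 using H1p xpos xlt by blast
  have C: "\<forall>\<tau>. 0 \<le> \<tau> \<and> \<tau> < tau_star s Y \<longrightarrow>
            -1 < h2 s Y (omega_plus s Y \<tau>) \<tau> \<and> h2 s Y (omega_plus s Y \<tau>) \<tau> < 1"
    unfolding eh2 using H2b xpos xlt by blast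
  show ?thesis using A B C H13 H23 unfolding eh1 eh2 xts by blast
qed

end
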